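(* For every parameter budget $p\ge 0$, the set $A_p=\{A : A \text{ is a valid architecture and } \mathrm{numParams}(A)\le p\}$ is finite.
   Context: Fix an input $X\in\mathbb{R}^{H\times W\times C}$ with $H,W,C\in\mathbb{N}^+$ fixed. An architecture $A$ is a finite sequence of layers $l_1,\dots,l_N$ applied in order to the input. Each layer is of one of three kinds: (i) an activation function $\sigma$ drawn from a fixed finite set $\Sigma$ (e.g. sigmoid, ReLU, softmax), which has no parameters and does not change the spatial dimensions; (ii) a non-parametric pooling layer $q_s$ (e.g. max or average pooling) with stride $s$ and kernel size $k$, which has no parameters and, having no padding, reduces each spatial dimension of its input by at least one pixel; (iii) a parametric layer $f_\theta$ (convolution, batch normalization, fully connected), with parameter vector $\theta$ of size $|\theta|\in\mathbb{N}^+$, which does not increase spatial dimensions. For a given input shape there are only finitely many choices of pooling layer producing a valid (positive) output size, and for each $n$ only finitely many choices of parametric layer with $|\theta|\le n$. Standing assumption: if $l_i\in\Sigma$ then $l_{i+1}\notin\Sigma$ (no two consecutive activations). An architecture is valid if every intermediate spatial dimension is a positive integer. $\mathrm{numParams}(A)=\sum_i |\theta_i|$, summing over the parametric layers of $A$. *)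

theory Defs
  imports Main
begin

text \<open>A spatial shape is a pair (height, width) of
integers (integers so that an invalid, non-positive size can be represented).
Layers are activations (from a type 's, restricted to a finite set Sig), pooling
layers (abstract descriptors of type 'q, with output-shape function pout) and
parametric layers (abstract descriptors of type 'f, with output-shape function fout
and parameter count psize).\<close>

datatype ('s, 'q, 'f) layer = Act 's | Pool 'q | Param 'f

fun apply_layer ::
  "('q \<Rightarrow> int \<times> int \<Rightarrow> int \<times> int) \<Rightarrow> ('f \<Rightarrow> int \<times> int \<Rightarrow> int \<times> int)
   \<Rightarrow> ('s, 'q, 'f) layer \<Rightarrow> int \<times> int \<Rightarrow> int \<times> int" where
  "apply_layer pout fout (Act s) d = d"
| "apply_layer pout fout (Pool q) d = pout q d"
| "apply_layer pout fout (Param f) d = fout f d"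

fun valid_from ::
  "('q \<Rightarrow> int \<times> int \<Rightarrow> int \<times> int) \<Rightarrow> ('f \<Rightarrow> int \<times> int \<Rightarrow> int \<times> int)
   \<Rightarrow> int \<times> int \<Rightarrow> ('s, 'q, 'f) layer list \<Rightarrow> bool" where
  "valid_from pout fout d [] = True"
| "valid_from pout fout d (l # ls) =
     (let d' = apply_layer pout fout l d
      in fst d' > 0 \<and> snd d' > 0 \<and> valid_from pout fout d' ls)"

definition is_act :: "('s, 'q, 'f) layer \<Rightarrow> bool" where
  "is_act l = (case l of Act _ \<Rightarrow> True | _ \<Rightarrow> False)"

definition valid_arch ::
  "'s set \<Rightarrow> ('q \<Rightarrow> int \<times> int \<Rightarrow> int \<times> int) \<Rightarrow> ('f \<Rightarrow> int \<times> int \<Rightarrow> int \<times> int)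
   \<Rightarrow> int \<Rightarrow> int \<Rightarrow> ('s, 'q, 'f) layer list \<Rightarrow> bool" where
  "valid_arch Sig pout fout H W A \<longleftrightarrow>
     (\<forall>s. Act s \<in> set A \<longrightarrow> s \<in> Sig) \<and>
     (\<forall>i. Suc i < length A \<longrightarrow> is_act (A ! i) \<longrightarrow> \<not> is_act (A ! Suc i)) \<and>
     valid_from pout fout (H, W) A"

definition layer_params :: "('f \<Rightarrow> nat) \<Rightarrow> ('s, 'q, 'f) layer \<Rightarrow> nat" where
  "layer_params psize l = (case l of Param f \<Rightarrow> psize f | _ \<Rightarrow> 0)"

definition numParams :: "('f \<Rightarrow> nat) \<Rightarrow> ('s, 'q, 'f) layer list \<Rightarrow> nat" where
  "numParams psize A = sum_list (map (layer_params psize) A)"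

end

theory Submission
  imports Defs
begin

lemma acts_bound:
  assumes "\<forall>i. Suc i < length A \<longrightarrow> is_act (A ! i) \<longrightarrow> \<not> is_act (A ! Suc i)"
  shows "length A \<le> 2 * length (filter (\<lambda>l. \<not> is_act l) A) + 1"
  using assms
proof (induction A rule: induct_list012)
  case 1 then show ?case by simp
next
  case (2 x) then show ?case by simp
next
  case (3 x y zs)
  have h1: "\<forall>i. Suc i < length (y # zs) \<longrightarrow> is_act ((y # zs) ! i) \<longrightarrow> \<not> is_act ((y # zs) ! Suc i)"
    using "3.prems" by (metis Suc_less_eq length_Cons nth_Cons_Suc)
  have h2: "\<forall>i. Suc i < length zs \<longrightarrow> is_act (zs ! i) \<longrightarrow> \<not> is_act (zs ! Suc i)"
    using h1 by (metis Suc_less_eq length_Cons nth_Cons_Suc)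
  note IH1 = "3.IH"(2)[OF h1]
  note IH2 = "3.IH"(1)[OF h2]
  show ?case
  proof (cases "is_act x")
    case True
    then have "\<not> is_act y" using "3.prems" by (metis One_nat_def length_Cons less_Suc_eq_0_disj nat.simps(3) nth_Cons_0 nth_Cons_Suc zero_less_Suc)
    then show ?thesis using IH2 True by simp
  next
    case False
    then show ?thesis using IH1 by simp
  qed
qed

lemma nonact_bound:
  assumes pool_shrink: "\<And>q h w. fst (pout q (h, w)) \<le> h - 1 \<and> snd (pout q (h, w)) \<le> w - 1"
    and param_noinc: "\<And>f h w. fst (fout f (h, w)) \<le> h \<and> snd (fout f (h, w)) \<le> w"
    and param_pos: "\<And>f. psize f \<ge> (1::nat)"
  shows "valid_from pout fout d A \<Longrightarrow> fst d > 0 \<Longrightarrow>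
     length (filter (\<lambda>l. \<not> is_act l) A) + 1 \<le> nat (fst d) + numParams psize A"
proof (induction A arbitrary: d)
  case Nil then show ?case by simp
next
  case (Cons l ls)
  let ?d' = "apply_layer pout fout l d"
  have v: "valid_from pout fout ?d' ls" "fst ?d' > 0"
    using Cons.prems by (auto simp: Let_def)
  note IH = Cons.IH[OF v]
  have np: "numParams psize (l # ls) = layer_params psize l + numParams psize ls"
    by (simp add: numParams_def)
  show ?case
  proof (cases l)
    case (Act s)
    then show ?thesis using IH np by (simp add: is_act_def layer_params_def)
  next
    case (Pool q)
    have "fst ?d' \<le> fst d - 1" using pool_shrink[of q "fst d" "snd d"] Pool by simp
    then show ?thesis using IH np Pool v(2) by (simp add: is_act_def layer_params_def)
  next
    case (Param f)
    have "fst ?d' \<le> fst d" using param_noinc[of f "fst d" "snd d"] Param by simp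
    then show ?thesis using IH np Param v(2) param_pos[of f] by (simp add: is_act_def layer_params_def)
  qed
qed

lemma pool_in_Q:
  assumes pool_shrink: "\<And>q h w. fst (pout q (h, w)) \<le> h - 1 \<and> snd (pout q (h, w)) \<le> w - 1"
    and param_noinc: "\<And>f h w. fst (fout f (h, w)) \<le> h \<and> snd (fout f (h, w)) \<le> w"
  shows "valid_from pout fout d A \<Longrightarrow> fst d \<le> H \<Longrightarrow> snd d \<le> W \<Longrightarrow> Pool q \<in> set A \<Longrightarrow>
     \<exists>h\<in>{1..H}. \<exists>w\<in>{1..W}. fst (pout q (h, w)) > 0 \<and> snd (pout q (h, w)) > 0"
proof (induction A arbitrary: d)
  case Nil then show ?case by simp
next
  case (Cons l ls)
  let ?d' = "apply_layer pout fout l d"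
  have v: "valid_from pout fout ?d' ls" "fst ?d' > 0" "snd ?d' > 0"
    using Cons.prems by (auto simp: Let_def)
  have le: "fst ?d' \<le> H \<and> snd ?d' \<le> W"
  proof (cases l)
    case (Pool q')
    then show ?thesis using pool_shrink[of q' "fst d" "snd d"] Cons.prems by simp
  next
    case (Param f)
    then show ?thesis using param_noinc[of f "fst d" "snd d"] Cons.prems by simp
  qed (use Cons.prems in simp)
  show ?case
  proof (cases "l = Pool q")
    case True
    have "fst d > 0" "snd d > 0"
      using pool_shrink[of q "fst d" "snd d"] v True by auto
    then show ?thesis using True v Cons.prems
      by (intro bexI[of _ "fst d"] bexI[of _ "snd d"]) auto
  next
    case False
    then show ?thesis using Cons.IH[OF v(1)] le Cons.prems by simp
  qed
qed

theorem theorem1: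
  fixes Sig :: "'s set"
    and pout :: "'q \<Rightarrow> int \<times> int \<Rightarrow> int \<times> int"
    and fout :: "'f \<Rightarrow> int \<times> int \<Rightarrow> int \<times> int"
    and psize :: "'f \<Rightarrow> nat"
    and H W :: int
    and p :: nat
  assumes "finite Sig"
    and "H > 0" and "W > 0"
    and pool_shrink: "\<And>q h w. fst (pout q (h, w)) \<le> h - 1 \<and> snd (pout q (h, w)) \<le> w - 1"
    and pool_finite: "\<And>h w. h > 0 \<Longrightarrow> w > 0 \<Longrightarrow>
           finite {q. fst (pout q (h, w)) > 0 \<and> snd (pout q (h, w)) > 0}"
    and param_noinc: "\<And>f h w. fst (fout f (h, w)) \<le> h \<and> snd (fout f (h, w)) \<le> w"
    and param_pos: "\<And>f. psize f \<ge> 1"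
    and param_finite: "\<And>n. finite {f. psize f \<le> n}"
  shows "finite {A. valid_arch Sig pout fout H W A \<and> numParams psize A \<le> p}"
proof -
  define Q where "Q = (\<Union>hw\<in>{1..H}\<times>{1..W}. {q. fst (pout q hw) > 0 \<and> snd (pout q hw) > 0})"
  have fQ: "finite Q" unfolding Q_def
    using pool_finite by (intro finite_UN_I) auto
  define B where "B = Act ` Sig \<union> Pool ` Q \<union> Param ` {f. psize f \<le> p}"
  have fB: "finite B" unfolding B_def using fQ assms(1) param_finite by simp
  define L where "L = 2 * (nat H + p) + 1"
  have "{A. valid_arch Sig pout fout H W A \<and> numParams psize A \<le> p}
        \<subseteq> {xs. set xs \<subseteq> B \<and> length xs \<le> L}"
  proof safe
    fix A assume va: "valid_arch Sig pout fout H W A" and np: "numParams psize A \<le> p"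
    have vf: "valid_from pout fout (H, W) A" using va by (simp add: valid_arch_def)
    have "length A \<le> 2 * length (filter (\<lambda>l. \<not> is_act l) A) + 1"
      using va acts_bound unfolding valid_arch_def by blast
    moreover have "length (filter (\<lambda>l. \<not> is_act l) A) + 1 \<le> nat H + numParams psize A"
      using nonact_bound[of pout fout psize "(H, W)" A, OF pool_shrink param_noinc param_pos] vf assms(2)
      by simp
    ultimately have c: "length A \<le> 2 * length (filter (\<lambda>l. \<not> is_act l) A) + 1"
      "length (filter (\<lambda>l. \<not> is_act l) A) \<le> nat H + p" using np by auto
    then show "length A \<le> L" unfolding L_def
      by (metis (no_types, lifting) add_le_mono1 le_trans mult_le_mono2)
    fix l assume l: "l \<in> set A"
    show "l \<in> B"
    proof (cases l)
      case (Act s) then show ?thesis using va l by (auto simp: valid_arch_def B_def)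
    next
      case (Pool q)
      then obtain h w where "h \<in> {1..H}" "w \<in> {1..W}" "fst (pout q (h, w)) > 0" "snd (pout q (h, w)) > 0"
        using pool_in_Q[of pout fout "(H, W)" A H W q, OF pool_shrink param_noinc] vf l by auto
      then have "q \<in> Q" unfolding Q_def by blast
      then show ?thesis using Pool by (simp add: B_def)
    next
      case (Param f)
      have "layer_params psize l \<le> numParams psize A"
        unfolding numParams_def using l by (simp add: member_le_sum_list)
      then have "psize f \<le> p" using np Param by (simp add: layer_params_def)
      then show ?thesis using Param by (simp add: B_def)
    qed
  qed
  moreover have "finite {xs. set xs \<subseteq> B \<and> length xs \<le> L}"
    using fB by (rule finite_lists_length_le)
  ultimately show ?thesis by (rule finite_subset)
qed

end
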